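(* For all integers $k\ge 2$, $s\in\mathbb{N}$ and every $\delta>0$, there exist $\gamma=\gamma(k,s,\delta)>0$ and $n_0$ such that the following holds for all $n\ge n_0$. Let $G$ be a $k$-uniform hypergraph on $n$ vertices with $\min\{e(G),\binom{n}{k}-e(G)\}\ge\delta n^k$, and let $W\subseteq\binom{V(G)}{k}$ satisfy $|W|\le\gamma n^k$. Then $G$ contains, as an induced subhypergraph, a non-homogeneous $(k,k,s)$-pattern $F$ that avoids $W$, i.e. $\binom{V(F)}{k}\cap W=\emptyset$.
   Context: For $k,t,s\in\mathbb{N}$ with $k,t\ge 2$, a $(k,t,s)$-pattern is a $k$-uniform hypergraph $F$ admitting a partition $V(F)=V_1\cup\cdots\cup V_t$ into parts of size $s$ each, such that for every $S\in\binom{V(F)}{k}$, whether $S\in E(F)$ depends only on $(|S\cap V_1|,\ldots,|S\cap V_t|)$. $F$ is homogeneous if it is empty (no edges) or complete (all $k$-subsets are edges). *)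

theory Defs
  imports Complex_Main
begin

definition ksets :: "'a set \<Rightarrow> nat \<Rightarrow> 'a set set" where
  "ksets X k = {S. S \<subseteq> X \<and> card S = k}"

definition is_pattern :: "nat \<Rightarrow> nat \<Rightarrow> nat \<Rightarrow> 'a set \<Rightarrow> 'a set set \<Rightarrow> bool" where
  "is_pattern k t s VF EF \<longleftrightarrow> finite VF \<and> EF \<subseteq> ksets VF k \<and>
     (\<exists>P :: nat \<Rightarrow> 'a set.
        (\<forall>i<t. P i \<subseteq> VF \<and> card (P i) = s) \<and>
        (\<forall>i<t. \<forall>j<t. i \<noteq> j \<longrightarrow> P i \<inter> P j = {}) \<and>
        (\<Union>i<t. P i) = VF \<and>
        (\<forall>S\<in>ksets VF k. \<forall>S'\<in>ksets VF k.
            (\<forall>i<t. card (S \<inter> P i) = card (S' \<inter> P i)) \<longrightarrow> (S \<in> EF \<longleftrightarrow> S' \<in> EF)))"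

definition homogeneous :: "nat \<Rightarrow> 'a set \<Rightarrow> 'a set set \<Rightarrow> bool" where
  "homogeneous k VF EF \<longleftrightarrow> EF = {} \<or> EF = ksets VF k"

definition induced_edges :: "nat \<Rightarrow> 'a set set \<Rightarrow> 'a set \<Rightarrow> 'a set set" where
  "induced_edges k E U = E \<inter> ksets U k"

end

theory Submission
  imports Defs "HOL-Library.Ramsey" "HOL-Library.FuncSet"
begin

lemma cheb_set:
  fixes g :: "'a \<Rightarrow> real"
  assumes "finite A" "\<And>a. a \<in> A \<Longrightarrow> g a \<ge> 0"
  shows "(\<Sum>a\<in>A. g a ^ m) * (\<Sum>a\<in>A. g a) \<le> real (card A) * (\<Sum>a\<in>A. g a ^ Suc m)"
proof -
  have "0 \<le> (\<Sum>a\<in>A. \<Sum>b\<in>A. (g a ^ m - g b ^ m) * (g a - g b))"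
  proof (intro sum_nonneg)
    fix a b assume "a \<in> A" "b \<in> A"
    then have "g a \<ge> 0" "g b \<ge> 0" using assms by auto
    then show "0 \<le> (g a ^ m - g b ^ m) * (g a - g b)"
    proof (cases "g a \<le> g b")
      case True
      then have "g a ^ m \<le> g b ^ m" using \<open>g a \<ge> 0\<close> by (rule power_mono)
      then show ?thesis using True by (intro mult_nonpos_nonpos) auto
    next
      case False
      then have "g b ^ m \<le> g a ^ m" using \<open>g b \<ge> 0\<close> by (intro power_mono) auto
      then show ?thesis using False by (intro mult_nonneg_nonneg) auto
    qed
  qed
  also have "\<dots> = (\<Sum>a\<in>A. \<Sum>b\<in>A. g a ^ Suc m) + (\<Sum>a\<in>A. \<Sum>b\<in>A. g b ^ Suc m)
      - (\<Sum>a\<in>A. \<Sum>b\<in>A. g a ^ m * g b) - (\<Sum>a\<in>A. \<Sum>b\<in>A. g b ^ m * g a)"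
  proof -
    have p: "(g a ^ m - g b ^ m) * (g a - g b) = g a ^ Suc m + g b ^ Suc m - g a ^ m * g b - g b ^ m * g a" for a b
      by (simp add: algebra_simps)
    show ?thesis unfolding p by (simp only: sum_subtractf sum.distrib)
  qed
  also have "(\<Sum>a\<in>A. \<Sum>b\<in>A. g b ^ m * g a) = (\<Sum>a\<in>A. \<Sum>b\<in>A. g a ^ m * g b)"
    by (rule sum.swap[where g="\<lambda>a b. g b ^ m * g a" and A=A and B=A])
  also have "(\<Sum>a\<in>A. \<Sum>b\<in>A. g b ^ Suc m) = (\<Sum>a\<in>A. \<Sum>b\<in>A. g a ^ Suc m)"
    by (rule sum.swap[where g="\<lambda>a b. g b ^ Suc m" and A=A and B=A])
  also have "(\<Sum>a\<in>A. \<Sum>b\<in>A. g a ^ Suc m) = real (card A) * (\<Sum>a\<in>A. g a ^ Suc m)"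
    by (simp add: sum_distrib_left mult.commute)
  also have "(\<Sum>a\<in>A. \<Sum>b\<in>A. g a ^ m * g b) = (\<Sum>a\<in>A. g a ^ m) * (\<Sum>a\<in>A. g a)"
    by (rule sum_product[symmetric])
  finally show ?thesis by (simp add: mult.commute)
qed

lemma power_mean:
  fixes g :: "'a \<Rightarrow> real"
  assumes "finite A" "A \<noteq> {}" "\<And>a. a \<in> A \<Longrightarrow> g a \<ge> 0"
  shows "real (card A) * ((\<Sum>a\<in>A. g a) / real (card A)) ^ m \<le> (\<Sum>a\<in>A. g a ^ m)"
proof (induction m)
  case 0
  then show ?case by simp
next
  case (Suc m)
  define c where "c = real (card A)"
  define S where "S = (\<Sum>a\<in>A. g a)"
  have "card A > 0" using assms(1,2) by (simp add: card_gt_0_iff)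
  then have c: "c > 0" unfolding c_def by simp
  have s0: "S / c \<ge> 0" using assms c unfolding S_def by (simp add: sum_nonneg)
  have ch: "(\<Sum>a\<in>A. g a ^ m) * S \<le> c * (\<Sum>a\<in>A. g a ^ Suc m)"
    using cheb_set[OF assms(1,3), where m=m] unfolding c_def S_def .
  have "c * (S / c) ^ Suc m = (c * (S / c) ^ m) * (S / c)"
    by (simp only: power_Suc2 mult.assoc)
  also have "\<dots> \<le> (\<Sum>a\<in>A. g a ^ m) * (S / c)"
    using Suc s0 unfolding c_def S_def by (rule mult_right_mono)
  also have "\<dots> = ((\<Sum>a\<in>A. g a ^ m) * S) / c" by simp
  also have "\<dots> \<le> (\<Sum>a\<in>A. g a ^ Suc m)"
    by (subst pos_divide_le_eq[OF c]) (metis ch mult.commute)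
  finally show ?case unfolding c_def S_def .
qed



definition Phi :: "nat \<Rightarrow> nat \<Rightarrow> nat \<Rightarrow> (nat \<times> nat \<Rightarrow> nat) set" where
  "Phi r t n = PiE ({..<r}\<times>{..<t}) (\<lambda>_. {..<n})"

definition good :: "nat \<Rightarrow> nat \<Rightarrow> ((nat \<Rightarrow> nat) \<Rightarrow> bool) \<Rightarrow> (nat \<times> nat \<Rightarrow> nat) \<Rightarrow> bool" where
  "good r t f \<phi> \<longleftrightarrow> (\<forall>i\<in>PiE {..<r} (\<lambda>_. {..<t}). f (\<lambda>j\<in>{..<r}. \<phi> (j, i j)))"

definition goodcnt :: "nat \<Rightarrow> nat \<Rightarrow> nat \<Rightarrow> ((nat \<Rightarrow> nat) \<Rightarrow> bool) \<Rightarrow> nat" where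
  "goodcnt r t n f = card {\<phi> \<in> Phi r t n. good r t f \<phi>}"

definition tcnt :: "nat \<Rightarrow> nat \<Rightarrow> ((nat \<Rightarrow> nat) \<Rightarrow> bool) \<Rightarrow> nat" where
  "tcnt r n f = card {x \<in> PiE {..<r} (\<lambda>_. {..<n}). f x}"

lemma fin_filter: "finite A \<Longrightarrow> finite {x\<in>A. P x}"
  by (rule finite_subset[of _ A]) auto

lemma fin_PiE_filter: "finite {x \<in> PiE {..<r::nat} (\<lambda>_. {..<n::nat}). P x}"
  by (intro fin_filter finite_PiE finite_lessThan)

lemma card_Phi: "card (Phi r t n) = n ^ (r * t)"
  unfolding Phi_def by (simp add: card_PiE card_cartesian_product)

lemma finite_Phi: "finite (Phi r t n)"
  unfolding Phi_def by (simp add: finite_PiE)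

lemma kst_base: "real (goodcnt 0 t n f) = real (tcnt 0 n f)"
proof -
  have a: "{x::nat\<Rightarrow>nat. x = (\<lambda>_. undefined) \<and> f x} = (if f (\<lambda>_. undefined) then {\<lambda>_. undefined} else {})" by auto
  have b: "{x::nat\<times>nat\<Rightarrow>nat. x = (\<lambda>_. undefined) \<and> f (\<lambda>_. undefined)} = (if f (\<lambda>_. undefined) then {\<lambda>_. undefined} else {})" by auto
  show ?thesis unfolding goodcnt_def tcnt_def good_def Phi_def by (simp add: PiE_empty_domain a b)
qed

lemma restrict_upd_eq:
  assumes "x \<in> PiE {..<Suc r} B"
  shows "(restrict x {..<r})(r := x r) = x"
proof
  fix j show "((restrict x {..<r})(r := x r)) j = x j"
  proof (cases "j < Suc r")
    case True then show ?thesis by (cases "j = r") auto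
  next
    case False then show ?thesis using PiE_arb[OF assms, of j] by simp
  qed
qed

lemma tcnt_step: "tcnt (Suc r) n f \<le> (\<Sum>y<n. tcnt r n (\<lambda>x. f (x(r := y))))"
proof -
  let ?X = "{x \<in> PiE {..<Suc r} (\<lambda>_. {..<n}). f x}"
  let ?Y = "Sigma {..<n} (\<lambda>y. {x \<in> PiE {..<r} (\<lambda>_. {..<n}). f (x(r := y))})"
  have "inj_on (\<lambda>x. (x r, restrict x {..<r})) ?X"
  proof (rule inj_onI)
    fix x x' assume x: "x \<in> ?X" and x': "x' \<in> ?X" and e: "(x r, restrict x {..<r}) = (x' r, restrict x' {..<r})"
    have x1: "x \<in> PiE {..<Suc r} (\<lambda>_. {..<n})" using x by blast
    have x1': "x' \<in> PiE {..<Suc r} (\<lambda>_. {..<n})" using x' by blast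
    have "x = (restrict x {..<r})(r := x r)" using restrict_upd_eq[OF x1] by simp
    also have "\<dots> = (restrict x' {..<r})(r := x' r)" using e by simp
    also have "\<dots> = x'" using restrict_upd_eq[OF x1'] by simp
    finally show "x = x'" .
  qed
  moreover have "(\<lambda>x. (x r, restrict x {..<r})) ` ?X \<subseteq> ?Y"
  proof
    fix z assume "z \<in> (\<lambda>x. (x r, restrict x {..<r})) ` ?X"
    then obtain x where x: "x \<in> ?X" and z: "z = (x r, restrict x {..<r})" by blast
    have x1: "x \<in> PiE {..<Suc r} (\<lambda>_. {..<n})" and fx: "f x" using x by blast+
    have "f ((restrict x {..<r})(r := x r))" using restrict_upd_eq[OF x1] fx by simp
    moreover have "x r \<in> {..<n}" using x1 by (rule PiE_mem) simp
    moreover have "restrict x {..<r} \<in> PiE {..<r} (\<lambda>_. {..<n})"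
      using x1 by (auto simp: PiE_iff)
    ultimately show "z \<in> ?Y" using z by simp
  qed
  moreover have "finite ?Y" by (intro finite_SigmaI fin_PiE_filter) simp
  ultimately have "card ?X \<le> card ?Y" by (rule card_inj_on_le)
  also have "card ?Y = (\<Sum>y<n. tcnt r n (\<lambda>x. f (x(r := y))))"
    unfolding tcnt_def by (rule card_SigmaI) (simp_all add: fin_PiE_filter)
  finally show ?thesis unfolding tcnt_def .
qed

definition cfun :: "nat \<Rightarrow> nat \<Rightarrow> nat \<Rightarrow> ((nat \<Rightarrow> nat) \<Rightarrow> bool) \<Rightarrow> (nat \<times> nat \<Rightarrow> nat) \<Rightarrow> nat" where
  "cfun r t n f \<psi> = card {y \<in> {..<n}. good r t (\<lambda>x. f (x(r := y))) \<psi>}"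

lemma good_step: "(\<Sum>\<psi>\<in>Phi r t n. cfun r t n f \<psi> ^ t) \<le> goodcnt (Suc r) t n f"
proof -
  let ?P = "{..<r}\<times>{..<t}"
  let ?Y = "\<lambda>\<psi>. {y \<in> {..<n}. good r t (\<lambda>x. f (x(r := y))) \<psi>}"
  let ?S = "Sigma (Phi r t n) (\<lambda>\<psi>. PiE ({r}\<times>{..<t}) (\<lambda>_. ?Y \<psi>))"
  let ?m = "\<lambda>(\<psi>, \<chi>). (\<lambda>p. if p \<in> ?P then \<psi> p else \<chi> p)"
  let ?G = "{\<phi> \<in> Phi (Suc r) t n. good (Suc r) t f \<phi>}"
  have "inj_on ?m ?S"
  proof (rule inj_onI)
    fix a b assume a: "a \<in> ?S" and b: "b \<in> ?S" and e: "?m a = ?m b"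
    obtain \<psi> \<chi> where av: "a = (\<psi>, \<chi>)" by (cases a)
    obtain \<psi>' \<chi>' where bv: "b = (\<psi>', \<chi>')" by (cases b)
    have ps: "\<psi> \<in> PiE ?P (\<lambda>_. {..<n})" "\<psi>' \<in> PiE ?P (\<lambda>_. {..<n})"
      using a b av bv by (auto simp: Phi_def)
    have ch: "\<chi> \<in> PiE ({r}\<times>{..<t}) (\<lambda>_. ?Y \<psi>)" "\<chi>' \<in> PiE ({r}\<times>{..<t}) (\<lambda>_. ?Y \<psi>')"
      using a b av bv by auto
    have e1: "(\<lambda>p. if p \<in> ?P then \<psi> p else \<chi> p) = (\<lambda>p. if p \<in> ?P then \<psi>' p else \<chi>' p)"
      using e av bv by simp
    have e2: "(if p \<in> ?P then \<psi> p else \<chi> p) = (if p \<in> ?P then \<psi>' p else \<chi>' p)" for p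
      using fun_cong[OF e1, of p] by (simp only:)
    have "\<psi> = \<psi>'"
    proof
      fix p show "\<psi> p = \<psi>' p"
      proof (cases "p \<in> ?P")
        case True then show ?thesis using e2[of p] by simp
      next
        case False then show ?thesis using PiE_arb[OF ps(1) False] PiE_arb[OF ps(2) False] by simp
      qed
    qed
    moreover have "\<chi> = \<chi>'"
    proof
      fix p show "\<chi> p = \<chi>' p"
      proof (cases "p \<in> {r}\<times>{..<t}")
        case True then have "p \<notin> ?P" by auto
        then show ?thesis using e2[of p] by simp
      next
        case False then show ?thesis using PiE_arb[OF ch(1) False] PiE_arb[OF ch(2) False] by simp
      qed
    qed
    ultimately show "a = b" using av bv by simp
  qed
  moreover have "?m ` ?S \<subseteq> ?G"
  proof
    fix z assume "z \<in> ?m ` ?S"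
    then obtain \<psi> \<chi> where pc: "(\<psi>, \<chi>) \<in> ?S" and z: "z = ?m (\<psi>, \<chi>)" by blast
    have ps: "\<psi> \<in> PiE ?P (\<lambda>_. {..<n})" using pc by (auto simp: Phi_def)
    have ch: "\<chi> \<in> PiE ({r}\<times>{..<t}) (\<lambda>_. ?Y \<psi>)" using pc by auto
    define \<phi> where "\<phi> = (\<lambda>p. if p \<in> ?P then \<psi> p else \<chi> p)"
    have zp: "z = \<phi>" using z \<phi>_def by simp
    have "\<phi> \<in> Phi (Suc r) t n"
      unfolding Phi_def PiE_iff
    proof (intro conjI ballI)
      fix p assume p: "p \<in> {..<Suc r}\<times>{..<t}"
      show "\<phi> p \<in> {..<n}"
      proof (cases "p \<in> ?P")
        case True then show ?thesis using PiE_mem[OF ps True] \<phi>_def by simp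
      next
        case False
        then have "p \<in> {r}\<times>{..<t}" using p by auto
        then have "\<chi> p \<in> ?Y \<psi>" by (rule PiE_mem[OF ch])
        then show ?thesis using False \<phi>_def by simp
      qed
    next
      show "\<phi> \<in> extensional ({..<Suc r}\<times>{..<t})"
      unfolding extensional_def
      proof (intro CollectI allI impI)
        fix p assume p: "p \<notin> {..<Suc r}\<times>{..<t}"
        then have "p \<notin> ?P" "p \<notin> {r}\<times>{..<t}" by auto
        then show "\<phi> p = undefined" using PiE_arb[OF ch] \<phi>_def by simp
      qed
    qed
    moreover have "good (Suc r) t f \<phi>"
      unfolding good_def
    proof
      fix i assume i: "i \<in> PiE {..<Suc r} (\<lambda>_. {..<t})"
      define y where "y = \<chi> (r, i r)"
      have "i r \<in> {..<t}" using PiE_mem[OF i, of r] by simp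
      then have "(r, i r) \<in> {r}\<times>{..<t}" by simp
      then have "y \<in> ?Y \<psi>" unfolding y_def by (rule PiE_mem[OF ch])
      then have gy: "good r t (\<lambda>x. f (x(r := y))) \<psi>" by simp
      have ir: "restrict i {..<r} \<in> PiE {..<r} (\<lambda>_. {..<t})" using i by (auto simp: PiE_iff)
      have fy: "f ((\<lambda>j\<in>{..<r}. \<psi> (j, restrict i {..<r} j))(r := y))"
        using gy ir unfolding good_def by blast
      have "(\<lambda>j\<in>{..<Suc r}. \<phi> (j, i j)) = (\<lambda>j\<in>{..<r}. \<psi> (j, restrict i {..<r} j))(r := y)"
      proof
        fix j show "(\<lambda>j\<in>{..<Suc r}. \<phi> (j, i j)) j = ((\<lambda>j\<in>{..<r}. \<psi> (j, restrict i {..<r} j))(r := y)) j"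
        proof (cases "j < r")
          case True
          have "i j \<in> {..<t}" using PiE_mem[OF i, of j] True by simp
          then have "(j, i j) \<in> ?P" using True by simp
          then show ?thesis using True \<phi>_def by simp
        next
          case False
          show ?thesis
          proof (cases "j = r")
            case True then show ?thesis using \<phi>_def y_def by simp
          next
            case False2: False
            then show ?thesis using False by simp
          qed
        qed
      qed
      then show "f (\<lambda>j\<in>{..<Suc r}. \<phi> (j, i j))" using fy by simp
    qed
    ultimately show "z \<in> ?G" using zp by simp
  qed
  moreover have "finite ?G" by (intro fin_filter finite_Phi)
  ultimately have "card ?S \<le> card ?G" by (rule card_inj_on_le)
  moreover have "card ?S = (\<Sum>\<psi>\<in>Phi r t n. cfun r t n f \<psi> ^ t)"
  proof -
    have "card ?S = (\<Sum>\<psi>\<in>Phi r t n. card (PiE ({r}\<times>{..<t}) (\<lambda>_. ?Y \<psi>)))"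
      by (rule card_SigmaI) (auto intro!: finite_Phi finite_PiE)
    also have "\<dots> = (\<Sum>\<psi>\<in>Phi r t n. cfun r t n f \<psi> ^ t)"
      by (intro sum.cong refl) (simp add: card_PiE card_cartesian_product cfun_def)
    finally show ?thesis .
  qed
  ultimately show ?thesis unfolding goodcnt_def by simp
qed

lemma card_filter_sum: "finite A \<Longrightarrow> real (card {x\<in>A. P x}) = (\<Sum>x\<in>A. if P x then 1 else 0)"
  by (simp add: sum.inter_filter[symmetric])

lemma sum_cfun: "(\<Sum>\<psi>\<in>Phi r t n. real (cfun r t n f \<psi>)) = (\<Sum>y<n. real (goodcnt r t n (\<lambda>x. f (x(r := y)))))"
proof -
  have "(\<Sum>\<psi>\<in>Phi r t n. real (cfun r t n f \<psi>))
      = (\<Sum>\<psi>\<in>Phi r t n. \<Sum>y<n. if good r t (\<lambda>x. f (x(r := y))) \<psi> then 1 else 0)"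
    unfolding cfun_def by (intro sum.cong refl card_filter_sum) simp
  also have "\<dots> = (\<Sum>y<n. \<Sum>\<psi>\<in>Phi r t n. if good r t (\<lambda>x. f (x(r := y))) \<psi> then 1 else 0)"
    by (rule sum.swap)
  also have "\<dots> = (\<Sum>y<n. real (goodcnt r t n (\<lambda>x. f (x(r := y)))))"
    unfolding goodcnt_def by (intro sum.cong refl card_filter_sum[symmetric] finite_Phi)
  finally show ?thesis .
qed

lemma kst:
  assumes n: "n \<ge> 1"
  shows "real n ^ (r*t) * (real (tcnt r n f) / real n ^ r) ^ (t ^ r) \<le> real (goodcnt r t n f)"
proof (induction r arbitrary: f)
  case 0
  then show ?case using kst_base by simp
next
  case (Suc r)
  define N where "N = real n ^ (r*t)"
  define T where "T = t ^ r"
  define dy where "dy y = real (tcnt r n (\<lambda>x. f (x(r := y)))) / real n ^ r" for y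
  define d where "d = real (tcnt (Suc r) n f) / real n ^ Suc r"
  have npos: "real n > 0" using n by simp
  have Npos: "N > 0" unfolding N_def using npos by simp
  have cardPhi: "real (card (Phi r t n)) = N" unfolding N_def card_Phi by simp
  have Phine: "Phi r t n \<noteq> {}" using Npos cardPhi by auto
  have dy0: "dy y \<ge> 0" for y unfolding dy_def by simp
  have d0: "d \<ge> 0" unfolding d_def by simp
  have IH: "N * dy y ^ T \<le> real (goodcnt r t n (\<lambda>x. f (x(r := y))))" for y
    using Suc.IH[of "\<lambda>x. f (x(r := y))"] unfolding N_def T_def dy_def .
  have s1: "N * (\<Sum>y<n. dy y ^ T) \<le> (\<Sum>\<psi>\<in>Phi r t n. real (cfun r t n f \<psi>))"
    unfolding sum_cfun sum_distrib_left by (intro sum_mono IH)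
  have s2: "real n * ((\<Sum>y<n. dy y) / real n) ^ T \<le> (\<Sum>y<n. dy y ^ T)"
  proof -
    have "0 \<in> {..<n}" using n by simp
    then have "{..<n} \<noteq> {}" by blast
    then show ?thesis using power_mean[of "{..<n}" dy T] dy0 by simp
  qed
  have "real (tcnt (Suc r) n f) \<le> (\<Sum>y<n. real (tcnt r n (\<lambda>x. f (x(r := y)))))"
    using tcnt_step[of r n f] by (simp flip: of_nat_sum)
  then have "real (tcnt (Suc r) n f) / real n ^ r \<le> (\<Sum>y<n. dy y)"
    unfolding dy_def sum_divide_distrib[symmetric] using npos by (simp add: divide_right_mono)
  then have s3: "d \<le> (\<Sum>y<n. dy y) / real n"
    unfolding d_def using npos by (simp add: divide_right_mono field_simps)
  have "real n * d ^ T \<le> real n * ((\<Sum>y<n. dy y) / real n) ^ T"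
    using s3 d0 npos by (intro mult_left_mono power_mono) auto
  then have s4: "N * (real n * d ^ T) \<le> (\<Sum>\<psi>\<in>Phi r t n. real (cfun r t n f \<psi>))"
    using s1 s2 Npos by (meson less_imp_le mult_left_mono order_trans)
  have s5: "real n * d ^ T \<le> (\<Sum>\<psi>\<in>Phi r t n. real (cfun r t n f \<psi>)) / N"
    using s4 Npos by (simp add: le_divide_eq mult.commute)
  have "N * (real n * d ^ T) ^ t \<le> N * ((\<Sum>\<psi>\<in>Phi r t n. real (cfun r t n f \<psi>)) / N) ^ t"
    using s5 Npos d0 npos by (intro mult_left_mono power_mono) auto
  also have "\<dots> \<le> (\<Sum>\<psi>\<in>Phi r t n. real (cfun r t n f \<psi>) ^ t)"
    using power_mean[of "Phi r t n" "\<lambda>\<psi>. real (cfun r t n f \<psi>)" t] finite_Phi Phine cardPhi by simp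
  also have "\<dots> = real (\<Sum>\<psi>\<in>Phi r t n. cfun r t n f \<psi> ^ t)" by simp
  also have "\<dots> \<le> real (goodcnt (Suc r) t n f)" using good_step by (simp only: of_nat_le_iff)
  finally have fin: "N * (real n * d ^ T) ^ t \<le> real (goodcnt (Suc r) t n f)" .
  have "real n ^ (Suc r * t) * d ^ (t ^ Suc r) = N * (real n * d ^ T) ^ t"
    unfolding N_def T_def by (simp add: power_add power_mult_distrib power_mult[symmetric] mult.commute)
  then show ?case using fin unfolding d_def by simp
qed



lemma switch_point: "P 0 \<Longrightarrow> \<not> P k \<Longrightarrow> \<exists>i<k. P i \<and> \<not> P (Suc i)"
proof (induction k)
  case 0 then show ?case by simp
next
  case (Suc k)
  then show ?case by (cases "P k") (auto intro: less_SucI)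
qed

lemma sl_image:
  assumes "S \<in> ksets {..<n::nat} k"
  shows "(\<lambda>j. sorted_list_of_set S ! j) ` {..<k} = S"
    and "\<And>j. j < k \<Longrightarrow> sorted_list_of_set S ! j < n"
proof -
  have fin: "finite S" using assms unfolding ksets_def by (auto intro: finite_subset)
  have len: "length (sorted_list_of_set S) = k" using assms fin unfolding ksets_def by simp
  have st: "set (sorted_list_of_set S) = S" using fin by simp
  show "(\<lambda>j. sorted_list_of_set S ! j) ` {..<k} = S"
    using st len by (auto simp: set_conv_nth)
  show "sorted_list_of_set S ! j < n" if "j < k" for j
  proof -
    have "sorted_list_of_set S ! j \<in> S" using st len that nth_mem by metis
    then show ?thesis using assms unfolding ksets_def by auto
  qed
qed

definition fprime :: "nat set set \<Rightarrow> nat \<Rightarrow> (nat \<Rightarrow> nat) \<Rightarrow> bool" where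
  "fprime E k a \<longleftrightarrow> a ` {..<k} \<in> E \<and> (\<lambda>j. a (Suc j)) ` {..<k} \<notin> E"

definition win :: "nat \<Rightarrow> nat \<Rightarrow> (nat \<Rightarrow> nat) \<Rightarrow> (nat \<Rightarrow> nat)" where
  "win i a w = (\<lambda>j\<in>{..<a}. w (i + j))"

lemma win_count:
  assumes "i + a \<le> m"
  shows "card {w \<in> PiE {..<m} (\<lambda>_. {..<n::nat}). f (win i a w)} \<le> tcnt a n f * n ^ (m - a)"
proof -
  let ?R = "{..<m} - {i..<i+a}"
  let ?X = "{w \<in> PiE {..<m} (\<lambda>_. {..<n}). f (win i a w)}"
  let ?Y = "{x \<in> PiE {..<a} (\<lambda>_. {..<n}). f x} \<times> PiE ?R (\<lambda>_. {..<n})"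
  have "inj_on (\<lambda>w. (win i a w, restrict w ?R)) ?X"
  proof (rule inj_onI)
    fix w w' assume w: "w \<in> ?X" and w': "w' \<in> ?X" and e: "(win i a w, restrict w ?R) = (win i a w', restrict w' ?R)"
    have wp: "w \<in> PiE {..<m} (\<lambda>_. {..<n})" "w' \<in> PiE {..<m} (\<lambda>_. {..<n})" using w w' by auto
    show "w = w'"
    proof
      fix j show "w j = w' j"
      proof (cases "j \<in> {..<m}")
        case False then show ?thesis using PiE_arb[OF wp(1) False] PiE_arb[OF wp(2) False] by simp
      next
        case jm: True
        show ?thesis
        proof (cases "j \<in> {i..<i+a}")
          case True
          then have "j - i < a" "i + (j - i) = j" by auto
          then show ?thesis using fun_cong[OF arg_cong[OF e, of fst], of "j - i"] unfolding win_def by simp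
        next
          case False
          then have "j \<in> ?R" using jm by simp
          then show ?thesis using fun_cong[OF arg_cong[OF e, of snd], of j] by simp
        qed
      qed
    qed
  qed
  moreover have "(\<lambda>w. (win i a w, restrict w ?R)) ` ?X \<subseteq> ?Y"
  proof
    fix z assume "z \<in> (\<lambda>w. (win i a w, restrict w ?R)) ` ?X"
    then obtain w where w: "w \<in> ?X" and z: "z = (win i a w, restrict w ?R)" by blast
    have wp: "w \<in> PiE {..<m} (\<lambda>_. {..<n})" and fw: "f (win i a w)" using w by auto
    have "win i a w \<in> PiE {..<a} (\<lambda>_. {..<n})"
      unfolding win_def using wp assms by (auto simp: PiE_iff)
    moreover have "restrict w ?R \<in> PiE ?R (\<lambda>_. {..<n})"
      using wp by (auto simp: PiE_iff)
    ultimately show "z \<in> ?Y" using z fw by simp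
  qed
  moreover have "finite ?Y" by (intro finite_cartesian_product fin_PiE_filter finite_PiE) auto
  ultimately have "card ?X \<le> card ?Y" by (rule card_inj_on_le)
  also have "card ?Y = tcnt a n f * n ^ (m - a)"
  proof -
    have sub: "{i..<i+a} \<subseteq> {..<m}" using assms by auto
    have "card ?R = m - a" using card_Diff_subset[OF finite_atLeastLessThan sub] by simp
    then show ?thesis unfolding tcnt_def by (simp add: card_cartesian_product card_PiE)
  qed
  finally show ?thesis .
qed

lemma window_count:
  assumes E: "E \<subseteq> ksets {..<n::nat} k" and k: "k \<ge> 1"
  shows "card E * card (ksets {..<n} k - E) \<le> k * (tcnt (Suc k) n (fprime E k) * n ^ (k - 1))"
proof -
  let ?K = "ksets {..<n} k"
  let ?W = "{w \<in> PiE {..<2*k} (\<lambda>_. {..<n}). w ` {..<k} \<in> E \<and> (\<lambda>j. w (k+j)) ` {..<k} \<notin> E}"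
  let ?sl = "sorted_list_of_set"
  let ?mk = "\<lambda>(S, T). (\<lambda>j\<in>{..<2*k}. if j < k then ?sl S ! j else ?sl T ! (j - k))"
  have im1: "(\<lambda>j. ?mk (S, T) j) ` {..<k} = S" if "S \<in> ?K" for S T
  proof -
    have "(\<lambda>j. ?mk (S, T) j) ` {..<k} = (\<lambda>j. ?sl S ! j) ` {..<k}"
      by (intro image_cong refl) auto
    then show ?thesis using sl_image(1)[OF that] by simp
  qed
  have im2: "(\<lambda>j. ?mk (S, T) (k + j)) ` {..<k} = T" if "T \<in> ?K" for S T
  proof -
    have "(\<lambda>j. ?mk (S, T) (k + j)) ` {..<k} = (\<lambda>j. ?sl T ! j) ` {..<k}"
      by (intro image_cong refl) auto
    then show ?thesis using sl_image(1)[OF that] by simp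
  qed
  have EK: "E \<subseteq> ?K" using E .
  have "inj_on ?mk (E \<times> (?K - E))"
  proof (rule inj_onI)
    fix a b assume a: "a \<in> E \<times> (?K - E)" and b: "b \<in> E \<times> (?K - E)" and e: "?mk a = ?mk b"
    obtain S T where av: "a = (S, T)" by (cases a)
    obtain S' T' where bv: "b = (S', T')" by (cases b)
    have m: "S \<in> ?K" "T \<in> ?K" "S' \<in> ?K" "T' \<in> ?K" using a b av bv EK by auto
    have e': "?mk (S, T) = ?mk (S', T')" using e av bv by simp
    have "S = (\<lambda>j. ?mk (S, T) j) ` {..<k}" using im1[OF m(1), of T] by (rule sym)
    also have "\<dots> = (\<lambda>j. ?mk (S', T') j) ` {..<k}" by (simp only: e')
    also have "\<dots> = S'" by (rule im1[OF m(3)])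
    finally have sS: "S = S'" .
    have t1: "T = (\<lambda>j. ?mk (S, T) (k + j)) ` {..<k}" using im2[OF m(2), of S] by (rule sym)
    have t2: "(\<lambda>j. ?mk (S, T) (k + j)) ` {..<k} = (\<lambda>j. ?mk (S', T') (k + j)) ` {..<k}" by (simp only: e')
    have t3: "(\<lambda>j. ?mk (S', T') (k + j)) ` {..<k} = T'" by (rule im2[OF m(4)])
    have "S = S' \<and> T = T'" using sS t1 t2 t3 by simp
    then show "a = b" using av bv by simp
  qed
  moreover have "?mk ` (E \<times> (?K - E)) \<subseteq> ?W"
  proof
    fix z assume "z \<in> ?mk ` (E \<times> (?K - E))"
    then obtain S T where st: "S \<in> E" "T \<in> ?K - E" and z: "z = ?mk (S, T)" by blast
    have m: "S \<in> ?K" "T \<in> ?K" using st EK by auto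
    have "?mk (S, T) \<in> PiE {..<2*k} (\<lambda>_. {..<n})"
    proof -
      have "?mk (S, T) j \<in> {..<n}" if "j \<in> {..<2*k}" for j
      proof (cases "j < k")
        case True then show ?thesis using sl_image(2)[OF m(1)] that by simp
      next
        case False
        then have "j - k < k" using that by auto
        then show ?thesis using sl_image(2)[OF m(2)] that False by simp
      qed
      then show ?thesis by (auto simp: PiE_iff)
    qed
    then show "z \<in> ?W" using z im1[OF m(1), of T] im2[OF m(2), of S] st by simp
  qed
  moreover have "finite ?W" by (intro fin_filter finite_PiE) auto
  ultimately have "card (E \<times> (?K - E)) \<le> card ?W" by (rule card_inj_on_le)
  then have c1: "card E * card (?K - E) \<le> card ?W" by (simp add: card_cartesian_product)
  have "?W \<subseteq> (\<Union>i<k. {w \<in> PiE {..<2*k} (\<lambda>_. {..<n}). fprime E k (win i (Suc k) w)})"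
  proof
    fix w assume w: "w \<in> ?W"
    define P where "P j = ((\<lambda>l. w (j + l)) ` {..<k} \<in> E)" for j
    have "P 0" using w unfolding P_def by simp
    moreover have "\<not> P k" using w unfolding P_def by simp
    ultimately obtain i where i: "i < k" "P i" "\<not> P (Suc i)" using switch_point[of P k] by blast
    have "win i (Suc k) w ` {..<k} = (\<lambda>l. w (i + l)) ` {..<k}"
      unfolding win_def by (intro image_cong refl) auto
    moreover have "(\<lambda>j. win i (Suc k) w (Suc j)) ` {..<k} = (\<lambda>l. w (Suc i + l)) ` {..<k}"
      unfolding win_def by (intro image_cong refl) auto
    ultimately have "fprime E k (win i (Suc k) w)" using i unfolding fprime_def P_def by simp
    then show "w \<in> (\<Union>i<k. {w \<in> PiE {..<2*k} (\<lambda>_. {..<n}). fprime E k (win i (Suc k) w)})"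
      using w i by blast
  qed
  then have "card ?W \<le> card (\<Union>i<k. {w \<in> PiE {..<2*k} (\<lambda>_. {..<n}). fprime E k (win i (Suc k) w)})"
    by (intro card_mono) (auto intro!: finite_UN_I fin_filter finite_PiE)
  also have "\<dots> \<le> (\<Sum>i<k. card {w \<in> PiE {..<2*k} (\<lambda>_. {..<n}). fprime E k (win i (Suc k) w)})"
    by (rule card_UN_le) simp
  also have "\<dots> \<le> (\<Sum>i<k. tcnt (Suc k) n (fprime E k) * n ^ (2*k - Suc k))"
    by (intro sum_mono win_count) auto
  also have "\<dots> = k * (tcnt (Suc k) n (fprime E k) * n ^ (k - 1))"
    using k by simp
  finally show ?thesis using c1 by simp
qed



lemma fiber_card_le:
  assumes D: "finite D" and P: "P \<subseteq> D"
  shows "card {\<phi> \<in> PiE D (\<lambda>_. {..<n::nat}). Q (restrict \<phi> P)} \<le> card {\<psi> \<in> PiE P (\<lambda>_. {..<n}). Q \<psi>} * n ^ (card D - card P)"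
proof -
  let ?X = "{\<phi> \<in> PiE D (\<lambda>_. {..<n::nat}). Q (restrict \<phi> P)}"
  let ?Y = "{\<psi> \<in> PiE P (\<lambda>_. {..<n}). Q \<psi>} \<times> PiE (D - P) (\<lambda>_. {..<n})"
  have "inj_on (\<lambda>\<phi>. (restrict \<phi> P, restrict \<phi> (D - P))) ?X"
  proof (rule inj_onI)
    fix x y assume x: "x \<in> ?X" and y: "y \<in> ?X" and e: "(restrict x P, restrict x (D - P)) = (restrict y P, restrict y (D - P))"
    have xp: "x \<in> PiE D (\<lambda>_. {..<n})" "y \<in> PiE D (\<lambda>_. {..<n})" using x y by auto
    show "x = y"
    proof
      fix j show "x j = y j"
      proof (cases "j \<in> D")
        case False then show ?thesis using PiE_arb[OF xp(1) False] PiE_arb[OF xp(2) False] by simp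
      next
        case True
        show ?thesis
        proof (cases "j \<in> P")
          case True then show ?thesis using fun_cong[OF arg_cong[OF e, of fst], of j] by simp
        next
          case False then have "j \<in> D - P" using \<open>j \<in> D\<close> by simp
          then show ?thesis using fun_cong[OF arg_cong[OF e, of snd], of j] by simp
        qed
      qed
    qed
  qed
  moreover have "(\<lambda>\<phi>. (restrict \<phi> P, restrict \<phi> (D - P))) ` ?X \<subseteq> ?Y"
  proof
    fix z assume "z \<in> (\<lambda>\<phi>. (restrict \<phi> P, restrict \<phi> (D - P))) ` ?X"
    then obtain x where x: "x \<in> ?X" and z: "z = (restrict x P, restrict x (D - P))" by blast
    have xp: "x \<in> PiE D (\<lambda>_. {..<n})" and q: "Q (restrict x P)" using x by auto
    have "restrict x P \<in> PiE P (\<lambda>_. {..<n})" using xp P by (auto simp: PiE_iff)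
    moreover have "restrict x (D - P) \<in> PiE (D - P) (\<lambda>_. {..<n})" using xp by (auto simp: PiE_iff)
    ultimately show "z \<in> ?Y" using z q by simp
  qed
  moreover have "finite ?Y"
    using D P by (intro finite_cartesian_product fin_filter finite_PiE) (auto intro: finite_subset)
  ultimately have "card ?X \<le> card ?Y" by (rule card_inj_on_le)
  also have "card ?Y = card {\<psi> \<in> PiE P (\<lambda>_. {..<n}). Q \<psi>} * n ^ (card D - card P)"
  proof -
    have "card (D - P) = card D - card P" using D P by (simp add: card_Diff_subset finite_subset)
    then show ?thesis using D by (simp add: card_cartesian_product card_PiE)
  qed
  finally show ?thesis .
qed

lemma pair_eq_card:
  assumes "p \<noteq> q"
  shows "card {\<psi> \<in> PiE {p, q} (\<lambda>_. {..<n::nat}). \<psi> p = \<psi> q} \<le> n"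
proof -
  let ?X = "{\<psi> \<in> PiE {p, q} (\<lambda>_. {..<n::nat}). \<psi> p = \<psi> q}"
  have "inj_on (\<lambda>\<psi>. \<psi> p) ?X"
  proof (rule inj_onI)
    fix x y assume x: "x \<in> ?X" and y: "y \<in> ?X" and e: "x p = y p"
    have xp: "x \<in> PiE {p,q} (\<lambda>_. {..<n})" "y \<in> PiE {p,q} (\<lambda>_. {..<n})" using x y by auto
    show "x = y"
    proof
      fix j show "x j = y j"
      proof (cases "j \<in> {p, q}")
        case False then show ?thesis using PiE_arb[OF xp(1) False] PiE_arb[OF xp(2) False] by simp
      next
        case True then show ?thesis using x y e by auto
      qed
    qed
  qed
  moreover have "(\<lambda>\<psi>. \<psi> p) ` ?X \<subseteq> {..<n}" by (auto simp: PiE_iff)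
  moreover have "finite {..<n}" by simp
  ultimately have "card ?X \<le> card {..<n}" by (rule card_inj_on_le)
  then show ?thesis by simp
qed

lemma noninj_count:
  assumes D: "finite D"
  shows "card {\<phi> \<in> PiE D (\<lambda>_. {..<n::nat}). \<not> inj_on \<phi> D} \<le> card D * card D * n ^ (card D - 1)"
proof -
  let ?B = "\<lambda>p q. {\<phi> \<in> PiE D (\<lambda>_. {..<n::nat}). restrict \<phi> {p, q} p = restrict \<phi> {p, q} q}"
  have sub: "{\<phi> \<in> PiE D (\<lambda>_. {..<n::nat}). \<not> inj_on \<phi> D} \<subseteq> (\<Union>p\<in>D. \<Union>q\<in>D - {p}. ?B p q)"
    unfolding inj_on_def by auto
  have each: "card (?B p q) \<le> n ^ (card D - 1)" if "p \<in> D" "q \<in> D - {p}" for p q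
  proof -
    have pq: "{p, q} \<subseteq> D" "p \<noteq> q" using that by auto
    have c2: "card {p, q} = 2" using pq by simp
    have "card (?B p q) \<le> card {\<psi> \<in> PiE {p, q} (\<lambda>_. {..<n}). \<psi> p = \<psi> q} * n ^ (card D - card {p, q})"
      by (rule fiber_card_le[OF D pq(1), of n "\<lambda>\<psi>. \<psi> p = \<psi> q"])
    also have "\<dots> \<le> n * n ^ (card D - 2)"
      unfolding c2 using pair_eq_card[OF pq(2), of n] by (rule mult_right_mono) simp
    also have "\<dots> = n ^ (card D - 1)"
    proof -
      have "card D \<ge> 2" using card_mono[OF D pq(1)] c2 by simp
      then have "card D - 1 = Suc (card D - 2)" by simp
      then show ?thesis by simp
    qed
    finally show ?thesis .
  qed
  have "card {\<phi> \<in> PiE D (\<lambda>_. {..<n::nat}). \<not> inj_on \<phi> D} \<le> card (\<Union>p\<in>D. \<Union>q\<in>D - {p}. ?B p q)"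
    using D by (intro card_mono sub) (auto intro!: finite_UN_I fin_filter finite_PiE)
  also have "\<dots> \<le> (\<Sum>p\<in>D. card (\<Union>q\<in>D - {p}. ?B p q))" by (rule card_UN_le[OF D])
  also have "\<dots> \<le> (\<Sum>p\<in>D. \<Sum>q\<in>D - {p}. card (?B p q))"
    using D by (intro sum_mono card_UN_le) auto
  also have "\<dots> \<le> (\<Sum>p\<in>D. \<Sum>q\<in>D - {p}. n ^ (card D - 1))"
    by (intro sum_mono each) auto
  also have "\<dots> \<le> (\<Sum>p\<in>D. card D * n ^ (card D - 1))"
    using D by (intro sum_mono) (simp add: card_Diff_subset mult_right_mono)
  also have "\<dots> = card D * card D * n ^ (card D - 1)" by simp
  finally show ?thesis .
qed

lemma finite_ksets: "finite X \<Longrightarrow> finite (ksets X k)"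
  unfolding ksets_def by (rule finite_subset[of _ "Pow X"]) auto

lemma hitW_count:
  assumes D: "finite D" and W: "W \<subseteq> ksets {..<n::nat} k"
  shows "card {\<phi> \<in> PiE D (\<lambda>_. {..<n}). \<exists>P\<in>ksets D k. \<phi> ` P \<in> W}
      \<le> card (ksets D k) * (card W * (k ^ k * n ^ (card D - k)))"
proof -
  let ?B = "\<lambda>P w. {\<phi> \<in> PiE D (\<lambda>_. {..<n::nat}). restrict \<phi> P ` P = w}"
  have finW: "finite W" using W finite_ksets[of "{..<n}" k] finite_subset by blast
  have sub: "{\<phi> \<in> PiE D (\<lambda>_. {..<n}). \<exists>P\<in>ksets D k. \<phi> ` P \<in> W} \<subseteq> (\<Union>P\<in>ksets D k. \<Union>w\<in>W. ?B P w)"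
    by auto
  have each: "card (?B P w) \<le> k ^ k * n ^ (card D - k)" if P: "P \<in> ksets D k" and w: "w \<in> W" for P w
  proof -
    have PD: "P \<subseteq> D" and cP: "card P = k" using P unfolding ksets_def by auto
    have finP: "finite P" using PD D finite_subset by blast
    have wk: "card w = k" and wn: "w \<subseteq> {..<n}" using W w unfolding ksets_def by auto
    have "card (?B P w) \<le> card {\<psi> \<in> PiE P (\<lambda>_. {..<n}). \<psi> ` P = w} * n ^ (card D - card P)"
      by (rule fiber_card_le[OF D PD])
    also have "card {\<psi> \<in> PiE P (\<lambda>_. {..<n}). \<psi> ` P = w} \<le> card (PiE P (\<lambda>_. w))"
    proof (rule card_mono)
      show "finite (PiE P (\<lambda>_. w))" using finP wn by (intro finite_PiE) (auto intro: finite_subset)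
      show "{\<psi> \<in> PiE P (\<lambda>_. {..<n}). \<psi> ` P = w} \<subseteq> PiE P (\<lambda>_. w)"
        by (auto simp: PiE_iff extensional_def)
    qed
    also have "card (PiE P (\<lambda>_. w)) = k ^ k" using finP wk cP by (simp add: card_PiE)
    finally show ?thesis using cP by simp
  qed
  have finK: "finite (ksets D k)" using D by (rule finite_ksets)
  have "card {\<phi> \<in> PiE D (\<lambda>_. {..<n}). \<exists>P\<in>ksets D k. \<phi> ` P \<in> W} \<le> card (\<Union>P\<in>ksets D k. \<Union>w\<in>W. ?B P w)"
    using D finK finW by (intro card_mono sub) (auto intro!: finite_UN_I fin_filter finite_PiE)
  also have "\<dots> \<le> (\<Sum>P\<in>ksets D k. card (\<Union>w\<in>W. ?B P w))" by (rule card_UN_le[OF finK])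
  also have "\<dots> \<le> (\<Sum>P\<in>ksets D k. \<Sum>w\<in>W. card (?B P w))"
    using finW by (intro sum_mono card_UN_le) auto
  also have "\<dots> \<le> (\<Sum>P\<in>ksets D k. \<Sum>w\<in>W. k ^ k * n ^ (card D - k))"
    by (intro sum_mono each) auto
  also have "\<dots> = card (ksets D k) * (card W * (k ^ k * n ^ (card D - k)))" by simp
  finally show ?thesis .
qed



definition rk :: "nat set \<Rightarrow> nat \<Rightarrow> nat" where
  "rk A x = card {y \<in> A. y < x}"

lemma rk_less_card:
  assumes f: "finite A" and x: "x \<in> A" shows "rk A x < card A"
proof -
  have "{y \<in> A. y < x} \<subseteq> A" by blast
  moreover have "x \<notin> {y \<in> A. y < x}" by simp
  ultimately have "{y \<in> A. y < x} \<subset> A" using x by blast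
  then show ?thesis unfolding rk_def by (rule psubset_card_mono[OF f])
qed

lemma rk_strict_mono:
  assumes f: "finite A" and x: "x \<in> A" and xy: "x < y" shows "rk A x < rk A y"
proof -
  have "{z \<in> A. z < x} \<subseteq> {z \<in> A. z < y}" using xy by auto
  moreover have "x \<notin> {z \<in> A. z < x}" by simp
  moreover have "x \<in> {z \<in> A. z < y}" using x xy by simp
  ultimately have "{z \<in> A. z < x} \<subset> {z \<in> A. z < y}" by blast
  moreover have fin: "finite {z \<in> A. z < y}" using f by simp
  ultimately show ?thesis unfolding rk_def using psubset_card_mono[OF fin] by blast
qed

lemma rk_mono:
  assumes f: "finite A" and xy: "x \<le> y" shows "rk A x \<le> rk A y"
proof -
  have "{z \<in> A. z < x} \<subseteq> {z \<in> A. z < y}" using xy by auto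
  moreover have fin: "finite {z \<in> A. z < y}" using f by simp
  ultimately show ?thesis unfolding rk_def using card_mono[OF fin] by blast
qed

lemma rk_Suc: "finite A \<Longrightarrow> x \<in> A \<Longrightarrow> card {y \<in> A. y \<le> x} = Suc (rk A x)"
proof -
  assume f: "finite A" and x: "x \<in> A"
  have "{y \<in> A. y \<le> x} = insert x {y \<in> A. y < x}" using x by auto
  then show ?thesis unfolding rk_def using f by simp
qed

lemma rk_bij: "finite A \<Longrightarrow> bij_betw (rk A) A {..<card A}"
proof -
  assume f: "finite A"
  have inj: "inj_on (rk A) A"
  proof (rule inj_onI)
    fix x y assume x: "x \<in> A" and y: "y \<in> A" and e: "rk A x = rk A y"
    show "x = y"
    proof (rule ccontr)
      assume "x \<noteq> y"
      then have "x < y \<or> y < x" by auto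
      then show False using rk_strict_mono[OF f x, of y] rk_strict_mono[OF f y, of x] e by auto
    qed
  qed
  have sub: "rk A ` A \<subseteq> {..<card A}" using rk_less_card[OF f] by auto
  have "card (rk A ` A) = card {..<card A}" using card_image[OF inj] by simp
  then have "rk A ` A = {..<card A}" using sub by (intro card_subset_eq) auto
  then show ?thesis using inj unfolding bij_betw_def by simp
qed

lemma card_rk_filter:
  assumes f: "finite A"
  shows "card {x \<in> A. P (rk A x)} = card {r \<in> {..<card A}. P r}"
proof -
  have b: "bij_betw (rk A) A {..<card A}" using rk_bij[OF f] .
  have "bij_betw (rk A) {x \<in> A. P (rk A x)} {r \<in> {..<card A}. P r}"
  proof -
    have "inj_on (rk A) {x \<in> A. P (rk A x)}" using b unfolding bij_betw_def by (auto intro: inj_on_subset)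
    moreover have "rk A ` {x \<in> A. P (rk A x)} = {r \<in> {..<card A}. P r}"
    proof
      show "rk A ` {x \<in> A. P (rk A x)} \<subseteq> {r \<in> {..<card A}. P r}" using b unfolding bij_betw_def by auto
      show "{r \<in> {..<card A}. P r} \<subseteq> rk A ` {x \<in> A. P (rk A x)}"
      proof
        fix r assume r: "r \<in> {r \<in> {..<card A}. P r}"
        then obtain x where "x \<in> A" "rk A x = r" using b unfolding bij_betw_def by (metis (no_types, lifting) imageE mem_Collect_eq)
        then show "r \<in> rk A ` {x \<in> A. P (rk A x)}" using r by auto
      qed
    qed
    ultimately show ?thesis unfolding bij_betw_def by simp
  qed
  then show ?thesis by (rule bij_betw_same_card)
qed

lemma card_blocks:
  assumes f: "finite A" and s: "s > 0" and cA: "card A = m * s" and b: "b \<le> m"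
  shows "card {x \<in> A. a \<le> rk A x div s \<and> rk A x div s < b} = (b - a) * s"
proof -
  have "card {x \<in> A. a \<le> rk A x div s \<and> rk A x div s < b} = card {r \<in> {..<card A}. a \<le> r div s \<and> r div s < b}"
    by (rule card_rk_filter[OF f])
  also have "{r \<in> {..<card A}. a \<le> r div s \<and> r div s < b} = {a*s..<b*s}"
  proof -
    have "b * s \<le> card A" using cA b s by simp
    moreover have "a \<le> r div s \<longleftrightarrow> a * s \<le> r" for r using div_less_iff_less_mult[OF s, of r a] by linarith
    moreover have "r div s < b \<longleftrightarrow> r < b * s" for r using div_less_iff_less_mult[OF s, of r b] by linarith
    ultimately show ?thesis by auto
  qed
  also have "card {a*s..<b*s} = (b - a) * s" by (simp add: diff_mult_distrib)
  finally show ?thesis .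
qed

lemma gQ_part:
  assumes fI: "finite I" and QI: "Q \<subseteq> I" and q: "q \<in> Q" and pk: "rk I q div s \<le> k"
  shows "card {j \<in> {..<k}. card {q' \<in> Q. rk I q' div s \<le> j} \<le> rk Q q} = rk I q div s"
proof -
  let ?pt = "\<lambda>x. rk I x div s"
  have fQ: "finite Q" using fI QI finite_subset by blast
  have mono: "x \<le> y \<Longrightarrow> ?pt x \<le> ?pt y" for x y using rk_mono[OF fI] div_le_mono by blast
  have "{j \<in> {..<k}. card {q' \<in> Q. ?pt q' \<le> j} \<le> rk Q q} = {..<?pt q}"
  proof (intro set_eqI iffI)
    fix j assume j: "j \<in> {j \<in> {..<k}. card {q' \<in> Q. ?pt q' \<le> j} \<le> rk Q q}"
    show "j \<in> {..<?pt q}"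
    proof (rule ccontr)
      assume "j \<notin> {..<?pt q}"
      then have jq: "?pt q \<le> j" by simp
      have "{y \<in> Q. y \<le> q} \<subseteq> {q' \<in> Q. ?pt q' \<le> j}" using mono jq by (auto intro: order_trans)
      then have "card {y \<in> Q. y \<le> q} \<le> card {q' \<in> Q. ?pt q' \<le> j}"
        by (rule card_mono[OF fin_filter[OF fQ]])
      then have "Suc (rk Q q) \<le> card {q' \<in> Q. ?pt q' \<le> j}" using rk_Suc[OF fQ q] by simp
      then show False using j by simp
    qed
  next
    fix j assume j: "j \<in> {..<?pt q}"
    have "{q' \<in> Q. ?pt q' \<le> j} \<subseteq> {y \<in> Q. y < q}"
    proof
      fix q' assume q': "q' \<in> {q' \<in> Q. ?pt q' \<le> j}"
      have "q' < q"
      proof (rule ccontr)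
        assume "\<not> q' < q"
        then have "?pt q \<le> ?pt q'" using mono by simp
        then show False using q' j by simp
      qed
      then show "q' \<in> {y \<in> Q. y < q}" using q' by simp
    qed
    then have "card {q' \<in> Q. ?pt q' \<le> j} \<le> rk Q q" unfolding rk_def
      by (rule card_mono[OF fin_filter[OF fQ]])
    moreover have "j < k" using j pk by simp
    ultimately show "j \<in> {j \<in> {..<k}. card {q' \<in> Q. ?pt q' \<le> j} \<le> rk Q q}" by simp
  qed
  then show ?thesis by simp
qed



lemma cum_card:
  assumes "finite Q"
  shows "card {q \<in> Q. g q \<le> j} = (\<Sum>j'\<le>j. card {q \<in> Q. g q = (j'::nat)})"
proof (induction j)
  case 0 then show ?case by simp
next
  case (Suc j)
  have "{q \<in> Q. g q \<le> Suc j} = {q \<in> Q. g q \<le> j} \<union> {q \<in> Q. g q = Suc j}" by auto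
  moreover have "{q \<in> Q. g q \<le> j} \<inter> {q \<in> Q. g q = Suc j} = {}" by auto
  ultimately have "card {q \<in> Q. g q \<le> Suc j} = card {q \<in> Q. g q \<le> j} + card {q \<in> Q. g q = Suc j}"
    using assms by (simp add: card_Un_disjoint)
  then show ?case using Suc by simp
qed

definition SQ :: "(nat \<times> nat \<Rightarrow> nat) \<Rightarrow> nat set \<Rightarrow> (nat \<Rightarrow> nat) \<Rightarrow> nat set" where
  "SQ \<phi> Q c = (\<lambda>q. \<phi> (c (rk Q q), q)) ` Q"

definition Cfg :: "nat \<Rightarrow> (nat \<Rightarrow> nat) set" where
  "Cfg k = PiE {..<k} (\<lambda>_. {..<Suc k})"

definition colr :: "(nat \<times> nat \<Rightarrow> nat) \<Rightarrow> nat set set \<Rightarrow> nat \<Rightarrow> nat set \<Rightarrow> (nat \<Rightarrow> nat) set" where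
  "colr \<phi> E k Q = {c \<in> Cfg k. SQ \<phi> Q c \<in> E}"

definition gQ :: "nat set \<Rightarrow> nat \<Rightarrow> nat \<Rightarrow> nat set \<Rightarrow> (nat \<Rightarrow> nat)" where
  "gQ I s k Q = (\<lambda>r\<in>{..<k}. card {j \<in> {..<k}. card {q' \<in> Q. rk I q' div s \<le> j} \<le> r})"

lemma finite_Cfg: "finite (Cfg k)"
  unfolding Cfg_def by (intro finite_PiE) auto

context
  fixes k s t n :: nat and \<phi> :: "nat \<times> nat \<Rightarrow> nat" and E W :: "nat set set" and I :: "nat set" and Col :: "(nat \<Rightarrow> nat) set"
  assumes k2: "k \<ge> 2" and s2: "s \<ge> 2"
    and inj: "inj_on \<phi> ({..<Suc k}\<times>{..<t})"
    and rng: "\<phi> ` ({..<Suc k}\<times>{..<t}) \<subseteq> {..<n}"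
    and gd: "good (Suc k) t (fprime E k) \<phi>"
    and noW: "\<not> (\<exists>P\<in>ksets ({..<Suc k}\<times>{..<t}) k. \<phi> ` P \<in> W)"
    and It: "I \<subseteq> {..<t}" and cI: "card I = Suc k * s"
    and mono: "\<forall>Q\<in>nsets I k. colr \<phi> E k Q = Col"
begin

definition pt where "pt i = rk I i div s"
definition ps where "ps i = \<phi> (pt i, i)"
definition V where "V j = ps ` {i \<in> I. pt i = j}"

lemma fI: "finite I" using It finite_subset by blast

lemma spos: "s > 0" using s2 by simp

lemma pt_lt: "i \<in> I \<Longrightarrow> pt i < Suc k"
proof -
  assume i: "i \<in> I"
  have "rk I i < Suc k * s" using rk_less_card[OF fI i] cI by simp
  then show ?thesis unfolding pt_def using div_less_iff_less_mult[OF spos] by simp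
qed

lemma inD: "i \<in> I \<Longrightarrow> (pt i, i) \<in> {..<Suc k}\<times>{..<t}"
  using pt_lt It by auto

lemma ps_inj: "inj_on ps I"
proof (rule inj_onI)
  fix x y assume x: "x \<in> I" and y: "y \<in> I" and e: "ps x = ps y"
  have "(pt x, x) = (pt y, y)" using inj_onD[OF inj e[unfolded ps_def] inD[OF x] inD[OF y]] .
  then show "x = y" by simp
qed

lemma card_block: "j < Suc k \<Longrightarrow> card {i \<in> I. pt i = j} = s"
proof -
  assume j: "j < Suc k"
  have "{i \<in> I. pt i = j} = {i \<in> I. j \<le> rk I i div s \<and> rk I i div s < Suc j}"
    unfolding pt_def by auto
  also have "card \<dots> = (Suc j - j) * s"
    using card_blocks[OF fI spos cI, of "Suc j" j] j by simp
  finally show ?thesis by simp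
qed

lemma card_V: "j < Suc k \<Longrightarrow> card (V j) = s"
  unfolding V_def using card_block card_image[OF inj_on_subset[OF ps_inj]] by (metis (no_types, lifting) mem_Collect_eq subsetI)

lemma V_disj: "j \<noteq> j' \<Longrightarrow> V j \<inter> V j' = {}"
  unfolding V_def using ps_inj by (auto dest: inj_onD)

lemma colour_iff:
  assumes QI: "Q \<subseteq> I" and cQ: "card Q = k"
  shows "ps ` Q \<in> E \<longleftrightarrow> gQ I s k Q \<in> Col"
proof -
  have fQ: "finite Q" using QI fI finite_subset by blast
  have rkQ: "q \<in> Q \<Longrightarrow> rk Q q < k" for q using rk_less_card[OF fQ] cQ by simp
  have g: "gQ I s k Q (rk Q q) = pt q" if q: "q \<in> Q" for q
  proof -
    have "pt q \<le> k" using pt_lt q QI by fastforce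
    then show ?thesis unfolding gQ_def using gQ_part[OF fI QI q, of s k] rkQ[OF q] unfolding pt_def by simp
  qed
  have "ps ` Q = SQ \<phi> Q (gQ I s k Q)"
    unfolding SQ_def ps_def using g by (intro image_cong refl) simp
  moreover have "gQ I s k Q \<in> Cfg k"
  proof -
    have "card {j \<in> {..<k}. card {q' \<in> Q. rk I q' div s \<le> j} \<le> r} \<le> k" for r
      using card_mono[of "{..<k}" "{j \<in> {..<k}. card {q' \<in> Q. rk I q' div s \<le> j} \<le> r}"] by auto
    then show ?thesis unfolding Cfg_def gQ_def by (auto simp: PiE_iff less_Suc_eq_le)
  qed
  moreover have "Q \<in> nsets I k" using QI fQ cQ unfolding nsets_def by simp
  ultimately show ?thesis using mono unfolding colr_def by auto
qed

lemma QS_facts: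
  assumes X: "X \<subseteq> ps ` I"
  shows "ps ` {i \<in> I. ps i \<in> X} = X"
    and "card {i \<in> I. ps i \<in> X} = card X"
    and "card {q \<in> {i \<in> I. ps i \<in> X}. pt q = j} = card (X \<inter> V j)"
proof -
  show im: "ps ` {i \<in> I. ps i \<in> X} = X"
  proof
    show "ps ` {i \<in> I. ps i \<in> X} \<subseteq> X" by blast
    show "X \<subseteq> ps ` {i \<in> I. ps i \<in> X}"
    proof
      fix x assume x: "x \<in> X"
      then obtain i where "i \<in> I" "x = ps i" using X by blast
      then show "x \<in> ps ` {i \<in> I. ps i \<in> X}" using x by blast
    qed
  qed
  have inj1: "inj_on ps {i \<in> I. ps i \<in> X}" by (rule inj_on_subset[OF ps_inj]) blast
  show "card {i \<in> I. ps i \<in> X} = card X" using card_image[OF inj1] im by simp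
  have "ps ` {q \<in> {i \<in> I. ps i \<in> X}. pt q = j} = X \<inter> V j"
  proof
    show "ps ` {q \<in> {i \<in> I. ps i \<in> X}. pt q = j} \<subseteq> X \<inter> V j" unfolding V_def by blast
    show "X \<inter> V j \<subseteq> ps ` {q \<in> {i \<in> I. ps i \<in> X}. pt q = j}"
    proof
      fix x assume x: "x \<in> X \<inter> V j"
      then obtain i where "i \<in> I" "pt i = j" "x = ps i" unfolding V_def by blast
      then show "x \<in> ps ` {q \<in> {i \<in> I. ps i \<in> X}. pt q = j}" using x by blast
    qed
  qed
  moreover have inj2: "inj_on ps {q \<in> {i \<in> I. ps i \<in> X}. pt q = j}" by (rule inj_on_subset[OF ps_inj]) blast
  ultimately show "card {q \<in> {i \<in> I. ps i \<in> X}. pt q = j} = card (X \<inter> V j)"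
    using card_image[OF inj2] by simp
qed

lemma profile_iff:
  assumes S: "S \<subseteq> ps ` I" and S': "S' \<subseteq> ps ` I" and cS: "card S = k" and cS': "card S' = k"
    and pr: "\<forall>j<Suc k. card (S \<inter> V j) = card (S' \<inter> V j)"
  shows "S \<in> E \<longleftrightarrow> S' \<in> E"
proof -
  let ?Q = "{i \<in> I. ps i \<in> S}"
  let ?Q' = "{i \<in> I. ps i \<in> S'}"
  have fQ: "finite ?Q" "finite ?Q'" using fI by auto
  have cum: "card {q \<in> ?Q. pt q \<le> j} = card {q \<in> ?Q'. pt q \<le> j}" if j: "j < k" for j
  proof -
    have "card {q \<in> ?Q. pt q \<le> j} = (\<Sum>j'\<le>j. card {q \<in> ?Q. pt q = j'})" by (rule cum_card[OF fQ(1)])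
    also have "\<dots> = (\<Sum>j'\<le>j. card {q \<in> ?Q'. pt q = j'})"
    proof (rule sum.cong[OF refl])
      fix j' assume "j' \<in> {..j}"
      then have "j' < Suc k" using j by simp
      then show "card {q \<in> ?Q. pt q = j'} = card {q \<in> ?Q'. pt q = j'}"
        using QS_facts(3)[OF S, of j'] QS_facts(3)[OF S', of j'] pr by simp
    qed
    also have "\<dots> = card {q \<in> ?Q'. pt q \<le> j}" by (rule cum_card[OF fQ(2), symmetric])
    finally show ?thesis .
  qed
  have "gQ I s k ?Q = gQ I s k ?Q'"
    unfolding gQ_def
  proof (rule restrict_ext)
    fix r assume "r \<in> {..<k}"
    have "{j \<in> {..<k}. card {q' \<in> ?Q. rk I q' div s \<le> j} \<le> r} = {j \<in> {..<k}. card {q' \<in> ?Q'. rk I q' div s \<le> j} \<le> r}"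
      using cum unfolding pt_def by auto
    then show "card {j \<in> {..<k}. card {q' \<in> ?Q. rk I q' div s \<le> j} \<le> r} = card {j \<in> {..<k}. card {q' \<in> ?Q'. rk I q' div s \<le> j} \<le> r}"
      by simp
  qed
  moreover have "S \<in> E \<longleftrightarrow> gQ I s k ?Q \<in> Col"
    using colour_iff[of ?Q] QS_facts(1,2)[OF S] cS by auto
  moreover have "S' \<in> E \<longleftrightarrow> gQ I s k ?Q' \<in> Col"
    using colour_iff[of ?Q'] QS_facts(1,2)[OF S'] cS' by auto
  ultimately show ?thesis by simp
qed

lemma V_sub: "V j \<subseteq> ps ` I" unfolding V_def by blast

lemma psI_sub: "ps ` I \<subseteq> \<phi> ` ({..<Suc k}\<times>{..<t})"
  unfolding ps_def using inD by blast

lemma finite_V: "finite (V j)" unfolding V_def using fI by simp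

lemma pattern_e:
  assumes e1: "\<forall>l<k. e l < Suc k" and e2: "inj_on e {..<k}"
  shows "is_pattern k k s (\<Union>l<k. V (e l)) (induced_edges k E (\<Union>l<k. V (e l)))"
proof -
  let ?U = "\<Union>l<k. V (e l)"
  have UI: "?U \<subseteq> ps ` I" using V_sub by blast
  have prof: "S \<in> E \<longleftrightarrow> S' \<in> E"
    if S: "S \<in> ksets ?U k" and S': "S' \<in> ksets ?U k"
      and h: "\<forall>i<k. card (S \<inter> V (e i)) = card (S' \<inter> V (e i))" for S S'
  proof -
    have SU: "S \<subseteq> ?U" "S' \<subseteq> ?U" and cS: "card S = k" "card S' = k" using S S' unfolding ksets_def by auto
    have "\<forall>j<Suc k. card (S \<inter> V j) = card (S' \<inter> V j)"
    proof (intro allI impI)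
      fix j assume j: "j < Suc k"
      show "card (S \<inter> V j) = card (S' \<inter> V j)"
      proof (cases "j \<in> e ` {..<k}")
        case True
        then obtain l where "l < k" "j = e l" by blast
        then show ?thesis using h by simp
      next
        case False
        have "?U \<inter> V j = {}"
        proof -
          have "V (e l) \<inter> V j = {}" if "l < k" for l
            using False that V_disj[of "e l" j] by auto
          then show ?thesis by blast
        qed
        then have "S \<inter> V j = {}" "S' \<inter> V j = {}" using SU by blast+
        then show ?thesis by simp
      qed
    qed
    then show ?thesis using profile_iff[of S S'] SU UI cS by blast
  qed
  show ?thesis
    unfolding is_pattern_def
  proof (intro conjI exI[of _ "\<lambda>l. V (e l)"])
    show "finite ?U" using finite_V by blast
    show "induced_edges k E ?U \<subseteq> ksets ?U k" unfolding induced_edges_def by blast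
    show "\<forall>i<k. V (e i) \<subseteq> ?U \<and> card (V (e i)) = s" using card_V e1 by blast
    show "\<forall>i<k. \<forall>j<k. i \<noteq> j \<longrightarrow> V (e i) \<inter> V (e j) = {}"
      using V_disj e2 by (metis inj_on_def lessThan_iff)
    show "(\<Union>i<k. V (e i)) = ?U" by simp
    show "\<forall>S\<in>ksets ?U k. \<forall>S'\<in>ksets ?U k. (\<forall>i<k. card (S \<inter> V (e i)) = card (S' \<inter> V (e i))) \<longrightarrow>
        (S \<in> induced_edges k E ?U \<longleftrightarrow> S' \<in> induced_edges k E ?U)"
      unfolding induced_edges_def using prof by blast
  qed
qed

lemma noW_sub:
  assumes U: "U \<subseteq> ps ` I"
  shows "ksets U k \<inter> W = {}"
proof (rule ccontr)
  assume "ksets U k \<inter> W \<noteq> {}"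
  then obtain X where X: "X \<in> ksets U k" "X \<in> W" by blast
  let ?D = "{..<Suc k}\<times>{..<t}"
  let ?P = "{p \<in> ?D. \<phi> p \<in> X}"
  have XD: "X \<subseteq> \<phi> ` ?D" using X(1) U psI_sub unfolding ksets_def by blast
  have im: "\<phi> ` ?P = X" using XD by blast
  have "card ?P = card X" using card_image[OF inj_on_subset[OF inj, of ?P]] im by auto
  then have Pk: "?P \<in> ksets ?D k" using X(1) unfolding ksets_def by auto
  have "\<phi> ` ?P \<in> W" using im X(2) by simp
  then have "\<exists>P\<in>ksets ?D k. \<phi> ` P \<in> W" using Pk by (rule bexI)
  then show False using noW by simp
qed

lemma structure_final:
  "\<exists>U. U \<subseteq> {..<n} \<and> is_pattern k k s U (induced_edges k E U) \<and>
      \<not> homogeneous k U (induced_edges k E U) \<and> ksets U k \<inter> W = {}"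
proof -
  let ?D = "{..<Suc k}\<times>{..<t}"
  have ex: "\<exists>i. i \<in> I \<and> pt i = j" if "j < Suc k" for j
  proof -
    have "card {i \<in> I. pt i = j} > 0" using card_block[OF that] spos by simp
    then have "{i \<in> I. pt i = j} \<noteq> {}" by (metis card.empty less_irrefl)
    then show ?thesis by blast
  qed
  define b where "b j = (SOME i. i \<in> I \<and> pt i = j)" for j
  have b: "b j \<in> I \<and> pt (b j) = j" if "j < Suc k" for j
    unfolding b_def using someI_ex[OF ex[OF that]] .
  define a where "a = (\<lambda>j\<in>{..<Suc k}. \<phi> (j, b j))"
  have bt: "\<forall>j\<in>{..<Suc k}. b j \<in> {..<t}"
  proof
    fix j assume "j \<in> {..<Suc k}"
    then have "b j \<in> I" using b by simp
    then show "b j \<in> {..<t}" using It by (rule subsetD[rotated])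
  qed
  have i0: "(\<lambda>j\<in>{..<Suc k}. b j) \<in> PiE {..<Suc k} (\<lambda>_. {..<t})"
    using bt by (simp add: PiE_iff)
  have "fprime E k (\<lambda>j\<in>{..<Suc k}. \<phi> (j, (\<lambda>j\<in>{..<Suc k}. b j) j))"
    using bspec[OF gd[unfolded good_def] i0] .
  moreover have "(\<lambda>j\<in>{..<Suc k}. \<phi> (j, (\<lambda>j\<in>{..<Suc k}. b j) j)) = a"
    unfolding a_def by (rule restrict_ext) simp
  ultimately have fa: "fprime E k a" by simp
  have aps: "a j = ps (b j)" if "j < Suc k" for j
    unfolding a_def ps_def using b[OF that] that by simp
  have ainD: "(j, b j) \<in> ?D" if "j < Suc k" for j using bt that by simp
  define T1 where "T1 = a ` {..<k}"
  define T2 where "T2 = (\<lambda>j. a (Suc j)) ` {..<k}"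
  have T1E: "T1 \<in> E" using fa unfolding fprime_def T1_def by (rule conjunct1)
  have T2E: "T2 \<notin> E" using fa unfolding fprime_def T2_def by (rule conjunct2)
  have injT1: "inj_on a {..<k}"
  proof (rule inj_onI)
    fix x y assume x: "x \<in> {..<k}" and y: "y \<in> {..<k}" and e: "a x = a y"
    have xk: "x < Suc k" and yk: "y < Suc k" using x y by auto
    have eq: "\<phi> (x, b x) = \<phi> (y, b y)" using e xk yk unfolding a_def by simp
    have "(x, b x) = (y, b y)" by (rule inj_onD[OF inj eq ainD[OF xk] ainD[OF yk]])
    then show "x = y" by simp
  qed
  have injT2: "inj_on (\<lambda>j. a (Suc j)) {..<k}"
  proof (rule inj_onI)
    fix x y assume x: "x \<in> {..<k}" and y: "y \<in> {..<k}" and e: "a (Suc x) = a (Suc y)"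
    have xk: "Suc x < Suc k" and yk: "Suc y < Suc k" using x y by auto
    have eq: "\<phi> (Suc x, b (Suc x)) = \<phi> (Suc y, b (Suc y))" using e xk yk unfolding a_def by simp
    have "(Suc x, b (Suc x)) = (Suc y, b (Suc y))" by (rule inj_onD[OF inj eq ainD[OF xk] ainD[OF yk]])
    then show "x = y" by simp
  qed
  have cT1: "card T1 = k" unfolding T1_def using card_image[OF injT1] by simp
  have cT2: "card T2 = k" unfolding T2_def using card_image[OF injT2] by simp
  define U1 where "U1 = (\<Union>l<k. V l)"
  define U2 where "U2 = (\<Union>l<k. V (Suc l))"
  have pat1: "is_pattern k k s U1 (induced_edges k E U1)"
    unfolding U1_def using pattern_e[of id] by simp
  have pat2: "is_pattern k k s U2 (induced_edges k E U2)"
    unfolding U2_def using pattern_e[of Suc] by simp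
  have T1U: "T1 \<subseteq> U1"
  proof
    fix x assume "x \<in> T1"
    then obtain j where j: "j < k" "x = a j" unfolding T1_def by blast
    then have "x = ps (b j)" using aps by simp
    then have "x \<in> V j" unfolding V_def using b[of j] j by auto
    then show "x \<in> U1" unfolding U1_def using j by blast
  qed
  have T2U: "T2 \<subseteq> U2"
  proof
    fix x assume "x \<in> T2"
    then obtain j where j: "j < k" "x = a (Suc j)" unfolding T2_def by blast
    then have "x = ps (b (Suc j))" using aps by simp
    then have "x \<in> V (Suc j)" unfolding V_def using b[of "Suc j"] j by auto
    then show "x \<in> U2" unfolding U2_def using j by blast
  qed
  define M where "M = (\<Union>l\<in>{1..<k}. V l)"
  have cM: "card M = (k - 1) * s"
  proof -
    have "card M = (\<Sum>l\<in>{1..<k}. card (V l))"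
      unfolding M_def using finite_V V_disj by (intro card_UN_disjoint) auto
    also have "\<dots> = (\<Sum>l\<in>{1..<k}. s)" using card_V by (intro sum.cong refl) auto
    finally show ?thesis by simp
  qed
  have "k \<le> (k - 1) * s"
  proof -
    have "(k - 1) * 2 \<le> (k - 1) * s" using s2 by simp
    then show ?thesis using k2 by linarith
  qed
  then obtain S where SM: "S \<subseteq> M" and cS: "card S = k" using cM obtain_subset_with_card_n by metis
  have MU1: "M \<subseteq> U1" unfolding M_def U1_def by auto
  have MU2: "M \<subseteq> U2"
  proof
    fix x assume "x \<in> M"
    then obtain l where l: "l \<in> {1..<k}" "x \<in> V l" unfolding M_def by blast
    then have "l = Suc (l - 1)" "l - 1 < k" by auto
    then show "x \<in> U2" unfolding U2_def using l by (metis UN_iff lessThan_iff)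
  qed
  have U1I: "U1 \<subseteq> ps ` I" unfolding U1_def using V_sub by blast
  have U2I: "U2 \<subseteq> ps ` I" unfolding U2_def using V_sub by blast
  have sub_n: "U \<subseteq> ps ` I \<Longrightarrow> U \<subseteq> {..<n}" for U using psI_sub rng by blast
  show ?thesis
  proof (cases "S \<in> E")
    case True
    have "S \<in> induced_edges k E U2" using True SM MU2 cS unfolding induced_edges_def ksets_def by auto
    moreover have "T2 \<in> ksets U2 k" "T2 \<notin> induced_edges k E U2"
      using T2U cT2 T2E unfolding induced_edges_def ksets_def by auto
    ultimately have "\<not> homogeneous k U2 (induced_edges k E U2)" unfolding homogeneous_def by auto
    then show ?thesis using pat2 sub_n[OF U2I] noW_sub[OF U2I] by blast
  next
    case False
    have "T1 \<in> induced_edges k E U1" using T1E T1U cT1 unfolding induced_edges_def ksets_def by auto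
    moreover have "S \<in> ksets U1 k" "S \<notin> induced_edges k E U1"
      using False SM MU1 cS unfolding induced_edges_def ksets_def by auto
    ultimately have "\<not> homogeneous k U1 (induced_edges k E U1)" unfolding homogeneous_def by auto
    then show ?thesis using pat1 sub_n[OF U1I] noW_sub[OF U1I] by blast
  qed
qed

end



lemma ramsey_gen:
  assumes fC: "finite C"
  shows "\<exists>N::nat. \<forall>col. (\<forall>X\<in>nsets {..<N} r. col X \<in> C) \<longrightarrow>
           (\<exists>H\<in>nsets {..<N} m. \<exists>c. \<forall>X\<in>nsets H r. col X = c)"
proof -
  obtain h where h: "bij_betw h C {0..<card C}" using ex_bij_betw_finite_nat[OF fC] by blast
  obtain N :: nat where N: "partn_lst {..<N} (replicate (card C) m) r" using ramsey_full[of "replicate (card C) m" r] by blast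
  show ?thesis
  proof (intro exI allI impI)
    fix col :: "nat set \<Rightarrow> 'a" assume col: "\<forall>X\<in>nsets {..<N} r. col X \<in> C"
    let ?f = "\<lambda>X. h (col X)"
    have "?f \<in> nsets {..<N} r \<rightarrow> {..<card C}"
      using col h unfolding bij_betw_def by auto
    then obtain i H where i: "i < length (replicate (card C) m)" and H: "H \<in> nsets {..<N} (replicate (card C) m ! i)"
      and fH: "?f ` (nsets H r) \<subseteq> {i}"
      using partn_lstE[OF N, of ?f "card C"] by auto
    have Hm: "H \<in> nsets {..<N} m" using H i by simp
    have HN: "H \<subseteq> {..<N}" using Hm unfolding nsets_def by auto
    have "\<forall>X\<in>nsets H r. col X = inv_into C h i"
    proof
      fix X assume X: "X \<in> nsets H r"
      then have "X \<in> nsets {..<N} r" using HN nsets_mono by blast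
      then have cX: "col X \<in> C" using col by blast
      have "h (col X) = i" using fH X by blast
      then show "col X = inv_into C h i" using cX h unfolding bij_betw_def by (metis inv_into_f_f)
    qed
    then show "\<exists>H\<in>nsets {..<N} m. \<exists>c. \<forall>X\<in>nsets H r. col X = c" using Hm by blast
  qed
qed

lemma card_ksets_lessThan: "card (ksets {..<n} k) = n choose k"
proof -
  have "ksets {..<n} k = {K \<in> Pow {0..<n}. card K = k}" unfolding ksets_def by auto
  then show ?thesis by (simp add: binomial_def)
qed

lemma density_tcnt:
  assumes k1: "k \<ge> 1" and n1: "n \<ge> 1" and d0: "\<delta> > 0"
    and E: "E \<subseteq> ksets {..<n} k"
    and dens: "min (real (card E)) (real (n choose k) - real (card E)) \<ge> \<delta> * real n ^ k"
  shows "\<delta>^2 / real k \<le> real (tcnt (Suc k) n (fprime E k)) / real n ^ Suc k"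
proof -
  let ?K = "ksets {..<n} k"
  let ?T = "real (tcnt (Suc k) n (fprime E k))"
  have finK: "finite ?K" by (rule finite_ksets) simp
  have cKE: "card (?K - E) = card ?K - card E" using E finK by (simp add: card_Diff_subset finite_subset)
  have cEK: "card E \<le> card ?K" using E finK by (simp add: card_mono)
  have e1: "real (card E) \<ge> \<delta> * real n ^ k" using dens by simp
  have e2: "real (card (?K - E)) \<ge> \<delta> * real n ^ k"
    using dens cKE cEK card_ksets_lessThan[of n k] by (simp add: of_nat_diff)
  have dn0: "\<delta> * real n ^ k \<ge> 0" using d0 by simp
  have "(\<delta> * real n ^ k) * (\<delta> * real n ^ k) \<le> real (card E) * real (card (?K - E))"
    using e1 e2 dn0 by (intro mult_mono) auto
  also have "\<dots> \<le> real k * (?T * real n ^ (k - 1))"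
    using window_count[OF E k1] by (simp flip: of_nat_mult of_nat_power)
  finally have ineq: "(\<delta> * real n ^ k) * (\<delta> * real n ^ k) \<le> real k * (?T * real n ^ (k - 1))" .
  have eq: "(\<delta> * real n ^ k) * (\<delta> * real n ^ k) = (\<delta>^2 * real n ^ Suc k) * real n ^ (k - 1)"
  proof -
    have "k + k = Suc k + (k - 1)" using k1 by simp
    then have "real n ^ k * real n ^ k = real n ^ Suc k * real n ^ (k - 1)"
      by (metis power_add)
    then show ?thesis by (simp add: power2_eq_square algebra_simps)
  qed
  have "(\<delta>^2 * real n ^ Suc k) * real n ^ (k - 1) \<le> (real k * ?T) * real n ^ (k - 1)"
    using ineq unfolding eq by (metis mult.assoc)
  moreover have "real n ^ (k - 1) > 0" using n1 by simp
  ultimately have "\<delta>^2 * real n ^ Suc k \<le> real k * ?T" by simp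
  moreover have "real k > 0" "real n ^ Suc k > 0" using k1 n1 by auto
  ultimately show ?thesis by (simp add: divide_le_eq le_divide_eq mult.commute)
qed

lemma frac_le1: "(x::real) \<ge> 0 \<Longrightarrow> x / (x + 1) \<le> 1"
  by (simp add: divide_le_eq)

lemma main_inner:
  fixes k s t n :: nat and \<delta> c0 \<gamma> :: real and E W :: "nat set set"
  assumes k2: "k \<ge> 2" and s2: "s \<ge> 2" and d0: "\<delta> > 0"
    and tR: "\<forall>col. (\<forall>X\<in>nsets {..<t} k. col X \<in> Pow (Cfg k)) \<longrightarrow>
           (\<exists>H\<in>nsets {..<t} (Suc k * s). \<exists>c. \<forall>X\<in>nsets H k. col X = c)"
    and t1: "t \<ge> 1"
    and c0: "c0 = (\<delta>^2 / real k) ^ (t ^ Suc k)"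
    and \<gamma>: "\<gamma> = c0 / (4 * (real (card (ksets ({..<Suc k}\<times>{..<t}) k)) * real (k ^ k) + 1))"
    and n1: "n \<ge> 1" and nbig: "real n \<ge> 4 * real (Suc k * t) ^ 2 / c0"
    and E: "E \<subseteq> ksets {..<n} k"
    and dens: "min (real (card E)) (real (n choose k) - real (card E)) \<ge> \<delta> * real n ^ k"
    and W: "W \<subseteq> ksets {..<n} k" and cW: "real (card W) \<le> \<gamma> * real n ^ k"
  shows "\<exists>U. U \<subseteq> {..<n} \<and> is_pattern k k s U (induced_edges k E U) \<and>
      \<not> homogeneous k U (induced_edges k E U) \<and> ksets U k \<inter> W = {}"
proof -
  define D where "D = {..<Suc k}\<times>{..<t}"
  define N where "N = Suc k * t"
  define CK where "CK = real (card (ksets D k))"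
  let ?f = "fprime E k"
  have finD: "finite D" unfolding D_def by simp
  have cD: "card D = N" unfolding D_def N_def by (simp add: card_cartesian_product)
  have k1: "k \<ge> 1" using k2 by simp
  have npos: "real n > 0" using n1 by simp
  have p0: "\<delta>^2 / real k > 0" using d0 k1 by simp
  have c0pos: "c0 > 0" unfolding c0 using p0 by simp
  have CK0: "CK \<ge> 0" unfolding CK_def by simp
  have kt: "k * 1 \<le> k * t" using t1 by (rule mult_le_mono2)
  have Nk: "k \<le> N" unfolding N_def using kt by (simp only: mult_1_right mult_Suc)
  have "\<delta>^2 / real k \<le> real (tcnt (Suc k) n ?f) / real n ^ Suc k"
    by (rule density_tcnt[OF k1 n1 d0 E dens])
  then have "c0 \<le> (real (tcnt (Suc k) n ?f) / real n ^ Suc k) ^ (t ^ Suc k)"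
    unfolding c0 using p0 by (intro power_mono) auto
  then have "c0 * real n ^ N \<le> real n ^ (Suc k * t) * (real (tcnt (Suc k) n ?f) / real n ^ Suc k) ^ (t ^ Suc k)"
    unfolding N_def using npos by (simp add: mult.commute)
  also have "\<dots> \<le> real (goodcnt (Suc k) t n ?f)" by (rule kst) (use n1 in simp)
  finally have G: "c0 * real n ^ N \<le> real (card {\<phi> \<in> PiE D (\<lambda>_. {..<n}). good (Suc k) t ?f \<phi>})"
    unfolding goodcnt_def Phi_def D_def .
  let ?B1 = "{\<phi> \<in> PiE D (\<lambda>_. {..<n}). \<not> inj_on \<phi> D}"
  let ?B2 = "{\<phi> \<in> PiE D (\<lambda>_. {..<n}). \<exists>P\<in>ksets D k. \<phi> ` P \<in> W}"
  have "real (card ?B1) \<le> real (N * N * n ^ (N - 1))"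
    using noninj_count[OF finD, of n] cD by (simp only: of_nat_le_iff)
  also have "\<dots> = real N ^ 2 / real n * real n ^ N"
  proof -
    have "N \<ge> 1" using Nk k1 by simp
    then have "real n ^ N = real n * real n ^ (N - 1)" by (metis Suc_diff_le diff_Suc_1 power_Suc)
    then show ?thesis using npos by (simp add: power2_eq_square field_simps)
  qed
  also have "\<dots> \<le> c0 / 4 * real n ^ N"
  proof (rule mult_right_mono)
    show "real N ^ 2 / real n \<le> c0 / 4"
      using nbig npos c0pos unfolding N_def by (simp add: field_simps)
  qed simp
  finally have B1: "real (card ?B1) \<le> c0 / 4 * real n ^ N" .
  have "real (card ?B2) \<le> real (card (ksets D k) * (card W * (k ^ k * n ^ (N - k))))"
    using hitW_count[OF finD W] cD by (simp only: of_nat_le_iff)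
  also have "\<dots> = CK * real (k ^ k) * real (card W) * real n ^ (N - k)"
    unfolding CK_def by simp
  also have "\<dots> \<le> CK * real (k ^ k) * (\<gamma> * real n ^ k) * real n ^ (N - k)"
    using cW CK0 by (intro mult_right_mono mult_left_mono) auto
  also have "\<dots> = (CK * real (k ^ k)) * \<gamma> * real n ^ N"
  proof -
    have "real n ^ k * real n ^ (N - k) = real n ^ N" using Nk by (simp flip: power_add)
    then show ?thesis by (simp add: algebra_simps)
  qed
  also have "\<dots> \<le> c0 / 4 * real n ^ N"
  proof (rule mult_right_mono)
    have "(CK * real (k ^ k)) * \<gamma> = c0 / 4 * ((CK * real (k ^ k)) / (CK * real (k ^ k) + 1))"
      unfolding \<gamma> CK_def D_def by (simp add: field_simps)
    also have "\<dots> \<le> c0 / 4 * 1"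
    proof (rule mult_left_mono)
      have "CK * real (k ^ k) \<ge> 0" using CK0 by simp
      then show "CK * real (k ^ k) / (CK * real (k ^ k) + 1) \<le> 1" by (rule frac_le1)
      show "0 \<le> c0 / 4" using c0pos by simp
    qed
    finally show "(CK * real (k ^ k)) * \<gamma> \<le> c0 / 4" by simp
  qed simp
  finally have B2: "real (card ?B2) \<le> c0 / 4 * real n ^ N" .
  have "\<exists>\<phi>. \<phi> \<in> PiE D (\<lambda>_. {..<n}) \<and> good (Suc k) t ?f \<phi> \<and> \<phi> \<notin> ?B1 \<and> \<phi> \<notin> ?B2"
  proof (rule ccontr)
    assume "\<not> ?thesis"
    then have sub: "{\<phi> \<in> PiE D (\<lambda>_. {..<n}). good (Suc k) t ?f \<phi>} \<subseteq> ?B1 \<union> ?B2" by blast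
    have "card {\<phi> \<in> PiE D (\<lambda>_. {..<n}). good (Suc k) t ?f \<phi>} \<le> card (?B1 \<union> ?B2)"
      using finD by (intro card_mono[OF _ sub]) (auto intro: fin_filter finite_PiE)
    also have "\<dots> \<le> card ?B1 + card ?B2" by (rule card_Un_le)
    finally have "real (card {\<phi> \<in> PiE D (\<lambda>_. {..<n}). good (Suc k) t ?f \<phi>}) \<le> real (card ?B1) + real (card ?B2)"
      by (simp only: of_nat_le_iff of_nat_add[symmetric])
    then have "c0 * real n ^ N \<le> c0 / 4 * real n ^ N + c0 / 4 * real n ^ N" using G B1 B2 by linarith
    moreover have "c0 * real n ^ N > 0" using c0pos npos by simp
    ultimately show False by linarith
  qed
  then obtain \<phi> where \<phi>D: "\<phi> \<in> PiE D (\<lambda>_. {..<n})" and gd: "good (Suc k) t ?f \<phi>"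
    and inj: "inj_on \<phi> D" and noW: "\<not> (\<exists>P\<in>ksets D k. \<phi> ` P \<in> W)" by blast
  have rng: "\<phi> ` D \<subseteq> {..<n}" using \<phi>D by (auto simp: PiE_iff)
  have cp: "\<forall>X\<in>nsets {..<t} k. colr \<phi> E k X \<in> Pow (Cfg k)" unfolding colr_def by blast
  have "\<exists>H\<in>nsets {..<t} (Suc k * s). \<exists>c. \<forall>X\<in>nsets H k. colr \<phi> E k X = c"
    using mp[OF spec[OF tR, of "colr \<phi> E k"] cp] .
  then obtain I Col where I: "I \<in> nsets {..<t} (Suc k * s)" and mono: "\<forall>X\<in>nsets I k. colr \<phi> E k X = Col"
    by blast
  have It: "I \<subseteq> {..<t}" and cI: "card I = Suc k * s" using I unfolding nsets_def by auto
  show ?thesis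
    using structure_final[OF k2 s2 inj[unfolded D_def] rng[unfolded D_def] gd noW[unfolded D_def] It cI mono] .
qed

lemma pos4: "(x::real) \<ge> 0 \<Longrightarrow> 0 < 4 * (x + 1)" by simp

theorem proposition3p2:
  fixes k s :: nat and \<delta> :: real
  assumes "k \<ge> 2" and "s \<ge> 2" and "\<delta> > 0"
  shows "\<exists>\<gamma>::real. \<gamma> > 0 \<and> (\<exists>n0::nat. \<forall>n\<ge>n0. \<forall>(E::nat set set) (W::nat set set).
           E \<subseteq> ksets {..<n} k \<longrightarrow>
           min (real (card E)) (real (n choose k) - real (card E)) \<ge> \<delta> * real n ^ k \<longrightarrow>
           W \<subseteq> ksets {..<n} k \<longrightarrow>
           real (card W) \<le> \<gamma> * real n ^ k \<longrightarrow>
           (\<exists>U. U \<subseteq> {..<n} \<and>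
                is_pattern k k s U (induced_edges k E U) \<and>
                \<not> homogeneous k U (induced_edges k E U) \<and>
                ksets U k \<inter> W = {}))"
proof -
  have fC: "finite (Pow (Cfg k))" using finite_Cfg by simp
  obtain t :: nat where tR: "\<forall>col. (\<forall>X\<in>nsets {..<t} k. col X \<in> Pow (Cfg k)) \<longrightarrow>
           (\<exists>H\<in>nsets {..<t} (Suc k * s). \<exists>c. \<forall>X\<in>nsets H k. col X = c)"
    using ramsey_gen[OF fC, of k "Suc k * s"] by (elim exE) (rule that)
  have t1: "t \<ge> 1"
  proof -
    have "\<forall>X\<in>nsets {..<t} k. (\<lambda>_. {}) X \<in> Pow (Cfg k)" by simp
    then have "\<exists>H\<in>nsets {..<t} (Suc k * s). \<exists>c. \<forall>X\<in>nsets H k. (\<lambda>_::nat set. {} :: (nat \<Rightarrow> nat) set) X = c"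
      using mp[OF spec[OF tR, of "\<lambda>_. {}"]] by blast
    then obtain H where H: "H \<in> nsets {..<t} (Suc k * s)" by blast
    then have "H \<subseteq> {..<t}" "card H = Suc k * s" unfolding nsets_def by auto
    then have "Suc k * s \<le> t" using card_mono[of "{..<t}" H] by simp
    moreover have "Suc k * s \<ge> 1" using assms(2) by simp
    ultimately show ?thesis by simp
  qed
  define c0 where "c0 = (\<delta>^2 / real k) ^ (t ^ Suc k)"
  define \<gamma> where "\<gamma> = c0 / (4 * (real (card (ksets ({..<Suc k}\<times>{..<t}) k)) * real (k ^ k) + 1))"
  have c0pos: "c0 > 0" unfolding c0_def using assms by simp
  have "real (card (ksets ({..<Suc k}\<times>{..<t}) k)) * real (k ^ k) \<ge> 0" by simp
  then have "4 * (real (card (ksets ({..<Suc k}\<times>{..<t}) k)) * real (k ^ k) + 1) > 0" by (rule pos4)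
  then have gpos: "\<gamma> > 0" unfolding \<gamma>_def using c0pos by (rule divide_pos_pos[rotated])
  define n0 where "n0 = nat \<lceil>4 * real (Suc k * t) ^ 2 / c0\<rceil> + 1"
  show ?thesis
  proof (intro exI[of _ \<gamma>] conjI gpos exI[of _ n0] allI impI)
    fix n :: nat and E W :: "nat set set"
    assume n: "n \<ge> n0" and E: "E \<subseteq> ksets {..<n} k"
      and dens: "min (real (card E)) (real (n choose k) - real (card E)) \<ge> \<delta> * real n ^ k"
      and W: "W \<subseteq> ksets {..<n} k" and cW: "real (card W) \<le> \<gamma> * real n ^ k"
    have n1: "n \<ge> 1" using n unfolding n0_def by simp
    have a1: "4 * real (Suc k * t) ^ 2 / c0 \<le> real (nat \<lceil>4 * real (Suc k * t) ^ 2 / c0\<rceil>)"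
      by (rule real_nat_ceiling_ge)
    have "nat \<lceil>4 * real (Suc k * t) ^ 2 / c0\<rceil> \<le> n" using n unfolding n0_def by (rule add_leD1)
    then have a2: "real (nat \<lceil>4 * real (Suc k * t) ^ 2 / c0\<rceil>) \<le> real n" by (rule of_nat_mono)
    have nbig: "real n \<ge> 4 * real (Suc k * t) ^ 2 / c0" using a1 a2 by (rule order_trans)
    show "\<exists>U. U \<subseteq> {..<n} \<and> is_pattern k k s U (induced_edges k E U) \<and>
        \<not> homogeneous k U (induced_edges k E U) \<and> ksets U k \<inter> W = {}"
      by (rule main_inner[OF assms tR t1 c0_def \<gamma>_def n1 nbig E dens W cW])
  qed
qed


end
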